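(* Let $G_1$ and $G_2$ be OPERA DAGs with $G_1\sim G_2$. Then $G_1$ and $G_2$ are root consistent: for every event $v$ contained in both DAGs and every $j\ge 1$, if $v$ is a root of frame $j$ in $G_1$, then $v$ is a root of frame $j$ in $G_2$.
   Context: An OPERA DAG is a finite directed acyclic graph whose vertices are events. Each event $v$ has a creator $cr(v)$ among a fixed finite set of nodes, the same for both DAGs. Each node $i$ has weight (validating power) $w_i>0$, and $W=\sum_i w_i$. An edge $(u,v)$ means that $u$ references $v$ as a parent. An event $u$ reaches an event $v$ if $v$ is $u$ or an ancestor of $u$. $G[v]$ is the subgraph induced on $v$ and all its ancestors, and $G_1\sim G_2$ means $G_1[v]=G_2[v]$ for every event $v$ in both DAGs. A leaf event is the first event created by a node (an event with no parent created by the same node). Roots and frames are defined recursively in a DAG $G$. The root set $R_1$ of frame 1 consists of all leaf events. For $k\ge 1$, the root set $R_{k+1}$ consists of all events $r$ with $r\notin R_1\cup\dots\cup R_k$ such that the creators of the roots in $R_k$ reached by $r$ have total weight greater than $2W/3$. An event in $R_j$ is a root of frame $j$. *)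

theory Defs
  imports Complex_Main
begin

text \<open>A DAG: a set of events and a parent-reference edge relation; (u,v) in edges
  means that u references v as a parent.  The creator function cr, the node set N
  and the weights w are global (shared by both DAGs).\<close>
record 'e dag =
  events :: "'e set"
  edges  :: "('e \<times> 'e) set"

definition opera_dag :: "'n set \<Rightarrow> ('e \<Rightarrow> 'n) \<Rightarrow> ('n \<Rightarrow> real) \<Rightarrow> 'e dag \<Rightarrow> bool" where
  "opera_dag N cr w G \<longleftrightarrow>
     finite N \<and> (\<forall>i\<in>N. w i > 0) \<and>
     finite (events G) \<and> edges G \<subseteq> events G \<times> events G \<and> acyclic (edges G) \<and>
     (\<forall>v\<in>events G. cr v \<in> N)"

definition reaches :: "'e dag \<Rightarrow> 'e \<Rightarrow> 'e \<Rightarrow> bool" where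
  "reaches G u v \<longleftrightarrow> u \<in> events G \<and> (u, v) \<in> (edges G)\<^sup>*"

definition subdag :: "'e dag \<Rightarrow> 'e \<Rightarrow> 'e dag" where
  "subdag G v = (let S = {x. reaches G v x} in
     \<lparr> events = S, edges = edges G \<inter> (S \<times> S) \<rparr>)"

definition dag_sim :: "'e dag \<Rightarrow> 'e dag \<Rightarrow> bool" where
  "dag_sim G1 G2 \<longleftrightarrow> (\<forall>v. v \<in> events G1 \<and> v \<in> events G2 \<longrightarrow> subdag G1 v = subdag G2 v)"

definition leaf_events :: "('e \<Rightarrow> 'n) \<Rightarrow> 'e dag \<Rightarrow> 'e set" where
  "leaf_events cr G = {v \<in> events G. \<not> (\<exists>p. (v, p) \<in> edges G \<and> cr p = cr v)}"

text \<open>roots_aux N cr w G k = (R_k, R_1 \<union> ... \<union> R_k); index 0 is a dummy.\<close>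
fun roots_aux :: "'n set \<Rightarrow> ('e \<Rightarrow> 'n) \<Rightarrow> ('n \<Rightarrow> real) \<Rightarrow> 'e dag \<Rightarrow> nat \<Rightarrow> 'e set \<times> 'e set" where
  "roots_aux N cr w G 0 = ({}, {})"
| "roots_aux N cr w G (Suc 0) = (leaf_events cr G, leaf_events cr G)"
| "roots_aux N cr w G (Suc (Suc k)) =
     (let (Rk, U) = roots_aux N cr w G (Suc k);
          R' = {r \<in> events G. r \<notin> U \<and>
                  sum w (cr ` {x \<in> Rk. reaches G r x}) > 2 * sum w N / 3}
      in (R', U \<union> R'))"

definition root_set :: "'n set \<Rightarrow> ('e \<Rightarrow> 'n) \<Rightarrow> ('n \<Rightarrow> real) \<Rightarrow> 'e dag \<Rightarrow> nat \<Rightarrow> 'e set" where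
  "root_set N cr w G j = fst (roots_aux N cr w G j)"

end

theory Submission
  imports Defs
begin

lemma sim_reach:
  assumes "dag_sim G1 G2" "x \<in> events G1" "x \<in> events G2"
  shows "reaches G1 x y = reaches G2 x y"
proof -
  have "subdag G1 x = subdag G2 x" using assms unfolding dag_sim_def by blast
  then have "events (subdag G1 x) = events (subdag G2 x)" by simp
  then have "{y. reaches G1 x y} = {y. reaches G2 x y}" unfolding subdag_def Let_def by simp
  then show ?thesis by blast
qed

lemma sim_edge1:
  assumes "dag_sim G1 G2" "x \<in> events G1" "x \<in> events G2" "(x,p) \<in> edges G1"
  shows "(x,p) \<in> edges G2"
proof -
  have "subdag G1 x = subdag G2 x" using assms unfolding dag_sim_def by blast
  then have e: "edges (subdag G1 x) = edges (subdag G2 x)" by simp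
  have "reaches G1 x p" "reaches G1 x x" using assms unfolding reaches_def by auto
  then have "(x,p) \<in> edges (subdag G1 x)" using assms(4) unfolding subdag_def Let_def by simp
  then have "(x,p) \<in> edges (subdag G2 x)" using e by simp
  then show ?thesis unfolding subdag_def Let_def by simp
qed

lemma dag_sim_sym: "dag_sim G1 G2 \<Longrightarrow> dag_sim G2 G1"
  unfolding dag_sim_def by metis

lemma reach_ev:
  assumes "opera_dag N cr w G" "reaches G x y"
  shows "y \<in> events G"
proof -
  have "(x,y) \<in> (edges G)\<^sup>*" "x \<in> events G" using assms(2) unfolding reaches_def by auto
  then show ?thesis
  proof (cases rule: rtranclE)
    case (step z) then show ?thesis using assms(1) unfolding opera_dag_def by auto
  qed simp
qed

lemma main_ind:
  assumes o1: "opera_dag N cr w G1" and o2: "opera_dag N cr w G2"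
    and s: "dag_sim G1 G2"
  shows "\<forall>x. x \<in> events G1 \<and> x \<in> events G2 \<longrightarrow>
     (x \<in> fst (roots_aux N cr w G1 n) \<longleftrightarrow> x \<in> fst (roots_aux N cr w G2 n)) \<and>
     (x \<in> snd (roots_aux N cr w G1 n) \<longleftrightarrow> x \<in> snd (roots_aux N cr w G2 n))"
proof (induction n)
  case 0 then show ?case by simp
next
  case (Suc n)
  show ?case
  proof (cases n)
    case 0
    have "x \<in> leaf_events cr G1 \<longleftrightarrow> x \<in> leaf_events cr G2"
      if "x \<in> events G1" "x \<in> events G2" for x
      using sim_edge1[OF s that] sim_edge1[OF dag_sim_sym[OF s] that(2) that(1)] that
      unfolding leaf_events_def by blast
    then show ?thesis using 0 by simp
  next
    case (Suc m)
    obtain Rk1 U1 where r1: "roots_aux N cr w G1 (Suc m) = (Rk1, U1)" by fastforce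
    obtain Rk2 U2 where r2: "roots_aux N cr w G2 (Suc m) = (Rk2, U2)" by fastforce
    have IH: "\<And>x. x \<in> events G1 \<Longrightarrow> x \<in> events G2 \<Longrightarrow> (x \<in> Rk1 \<longleftrightarrow> x \<in> Rk2) \<and> (x \<in> U1 \<longleftrightarrow> x \<in> U2)"
      using Suc.IH r1 r2 Suc by auto
    have key: "{y \<in> Rk1. reaches G1 x y} = {y \<in> Rk2. reaches G2 x y}"
      if "x \<in> events G1" "x \<in> events G2" for x
    proof -
      have "reaches G1 x y \<Longrightarrow> y \<in> events G1 \<and> y \<in> events G2" for y
        using reach_ev[OF o1] reach_ev[OF o2] sim_reach[OF s that] by blast
      then show ?thesis using IH sim_reach[OF s that] by blast
    qed
    show ?thesis using Suc r1 r2 IH key by auto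
  qed
qed

theorem mainTheorem3:
  fixes N :: "'n set" and cr :: "'e \<Rightarrow> 'n" and w :: "'n \<Rightarrow> real"
    and G1 G2 :: "'e dag"
  assumes "opera_dag N cr w G1" and "opera_dag N cr w G2"
    and "dag_sim G1 G2"
  shows "\<forall>v j. v \<in> events G1 \<and> v \<in> events G2 \<and> j \<ge> 1 \<and> v \<in> root_set N cr w G1 j
            \<longrightarrow> v \<in> root_set N cr w G2 j"
  using main_ind[OF assms] unfolding root_set_def by blast

end
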